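(* For every integer $n\ge 0$, $$\Phi^{(2)}[a; b, b'; cq^{-n}, c'; x, y] = \frac{1}{(q/c; q)_n} \sum_{k=0}^n \begin{bmatrix} n \\ k \end{bmatrix} (-c)^{k-n} q^{\binom{n+1-k}{2}} \Phi^{(2)}[a; b, b'; c, c'; xq^k, y]$$ and $$\Phi^{(2)}[a; b, b'; cq^n, c'; x, y] = \sum_{k=0}^n \begin{bmatrix} n \\ k \end{bmatrix} c^k q^{2\binom{k}{2}} (cq^k; q)_{n-k}\, \Phi^{(2)}[a; b, b'; cq^k, c'; xq^k, y].$$
   Context: Let $q$ be a complex number with $0<|q|<1$. For complex $z$ and integer $m\ge 0$, $(z;q)_m=\prod_{j=0}^{m-1}(1-zq^j)$, with $(z;q)_0=1$. For integers $0\le k\le n$, $\begin{bmatrix} n \\ k \end{bmatrix}=\frac{(q;q)_n}{(q;q)_k(q;q)_{n-k}}$ is the $q$-binomial coefficient, and $\binom{j}{2}=j(j-1)/2$. The $q$-Appell function $\Phi^{(2)}$ is $$\Phi^{(2)}[a; b, b'; c, c'; x, y] = \sum_{m, n \geq 0} \frac{(a; q)_{m+n} (b; q)_m (b'; q)_n}{(q; q)_m (q; q)_n (c; q)_m (c'; q)_n} x^m y^n.$$ Identities are understood as identities of power series in $x,y$ (formal, or convergent for small $|x|,|y|$), with complex parameters chosen so that no denominator occurring vanishes. *)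

theory Defs
  imports "HOL-Analysis.Analysis"
begin

definition qpoch :: "complex \<Rightarrow> complex \<Rightarrow> nat \<Rightarrow> complex" where
  "qpoch z q m = (\<Prod>j<m. 1 - z * q ^ j)"

definition qbinom :: "complex \<Rightarrow> nat \<Rightarrow> nat \<Rightarrow> complex" where
  "qbinom q n k = qpoch q q n / (qpoch q q k * qpoch q q (n - k))"

definition Phi2 :: "complex \<Rightarrow> complex \<Rightarrow> complex \<Rightarrow> complex \<Rightarrow> complex \<Rightarrow> complex
    \<Rightarrow> complex \<Rightarrow> complex \<Rightarrow> complex" where
  "Phi2 q a b b' c c' x y =
     (\<Sum>\<^sub>\<infinity>(m, n)\<in>(UNIV :: (nat \<times> nat) set).
        qpoch a q (m + n) * qpoch b q m * qpoch b' q n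
        / (qpoch q q m * qpoch q q n * qpoch c q m * qpoch c' q n) * x ^ m * y ^ n)"

end

theory Submission
  imports Defs
begin


fun gb :: "complex \<Rightarrow> nat \<Rightarrow> nat \<Rightarrow> complex" where
  "gb q 0 k = (if k = 0 then 1 else 0)"
| "gb q (Suc n) 0 = 1"
| "gb q (Suc n) (Suc k) = gb q n (Suc k) + q ^ (n - k) * gb q n k"

lemma gb_0 [simp]: "gb q n 0 = 1"
  by (cases n) auto

lemma gb_big: "n < k \<Longrightarrow> gb q n k = 0"
proof (induction n arbitrary: k)
  case 0 then show ?case by simp
next
  case (Suc n) then show ?case by (cases k) auto
qed

lemma qpoch_0 [simp]: "qpoch z q 0 = 1" by (simp add: qpoch_def)

lemma qpoch_Suc: "qpoch z q (Suc n) = qpoch z q n * (1 - z * q ^ n)"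
  by (simp add: qpoch_def)

lemma qpoch_add: "qpoch z q (n + m) = qpoch z q n * qpoch (z * q ^ n) q m"
  by (induction m) (simp_all add: qpoch_Suc power_add mult.assoc)

lemma qpoch_Suc': "qpoch z q (Suc n) = (1 - z) * qpoch (z * q) q n"
  using qpoch_add[of z q 1 n] by (simp add: qpoch_Suc)

lemma gb_prod: "k \<le> n \<Longrightarrow> gb q n k * (qpoch q q k * qpoch q q (n - k)) = qpoch q q n"
proof (induction n arbitrary: k)
  case 0 then show ?case by simp
next
  case (Suc n k)
  show ?case
  proof (cases k)
    case 0 then show ?thesis by simp
  next
    case (Suc j)
    have j: "j \<le> n" using Suc.prems Suc by simp
    have A: "gb q n j * (qpoch q q j * qpoch q q (n - j)) = qpoch q q n" using Suc.IH j by simp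
    have B: "gb q n (Suc j) * (qpoch q q (Suc j) * qpoch q q (n - j)) = qpoch q q n * (1 - q ^ (n - j))"
    proof (cases "j = n")
      case True then show ?thesis by (simp add: gb_big)
    next
      case False
      then have "Suc j \<le> n" using j by simp
      then have "gb q n (Suc j) * (qpoch q q (Suc j) * qpoch q q (n - Suc j)) = qpoch q q n" using Suc.IH by simp
      moreover have "qpoch q q (n - j) = qpoch q q (n - Suc j) * (1 - q ^ (n - j))"
        using \<open>Suc j \<le> n\<close> by (metis Suc_diff_Suc Suc_le_lessD qpoch_Suc power_Suc diff_Suc_Suc mult.commute)
      ultimately show ?thesis by (metis mult.assoc mult.left_commute)
    qed
    have "gb q (Suc n) k * (qpoch q q k * qpoch q q (Suc n - k))
        = gb q n (Suc j) * (qpoch q q (Suc j) * qpoch q q (n - j))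
          + q ^ (n - j) * (gb q n j * (qpoch q q j * qpoch q q (n - j))) * (1 - q ^ Suc j)"
      using Suc by (simp add: qpoch_Suc algebra_simps)
    also have "\<dots> = qpoch q q n * (1 - q ^ (n - j)) + q ^ (n - j) * qpoch q q n * (1 - q ^ Suc j)"
      using A B by simp
    also have "\<dots> = qpoch q q n * (1 - q ^ (n - j) * q ^ Suc j)" by (simp add: algebra_simps)
    also have "q ^ (n - j) * q ^ Suc j = q ^ Suc n" using j by (simp add: power_add[symmetric])
    finally show ?thesis by (simp add: qpoch_Suc)
  qed
qed

lemma gb_pascal_sum:
  "(\<Sum>k\<le>Suc n. gb q (Suc n) k * f k) = (\<Sum>k\<le>n. gb q n k * f k) + (\<Sum>k\<le>n. q ^ (n - k) * gb q n k * f (Suc k))"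
proof -
  have "(\<Sum>k\<le>Suc n. gb q (Suc n) k * f k) = f 0 + (\<Sum>k\<le>n. gb q (Suc n) (Suc k) * f (Suc k))"
    by (subst sum.atMost_Suc_shift) simp
  also have "\<dots> = f 0 + (\<Sum>k\<le>n. gb q n (Suc k) * f (Suc k)) + (\<Sum>k\<le>n. q ^ (n - k) * gb q n k * f (Suc k))"
    by (simp add: sum.distrib algebra_simps)
  also have "f 0 + (\<Sum>k\<le>n. gb q n (Suc k) * f (Suc k)) = (\<Sum>k\<le>Suc n. gb q n k * f k)"
    by (rule sym, subst sum.atMost_Suc_shift, simp)
  also have "\<dots> = (\<Sum>k\<le>n. gb q n k * f k)" by (simp add: gb_big)
  finally show ?thesis .
qed

lemma choose2_Suc: "Suc k choose 2 = k + (k choose 2)"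
  by (simp add: numeral_2_eq_2)

lemma qbinomial_thm: "qpoch z q n = (\<Sum>k\<le>n. gb q n k * (- z) ^ k * q ^ (k choose 2))"
proof (induction n)
  case 0 then show ?case by (simp add: binomial_eq_0)
next
  case (Suc n)
  have "(\<Sum>k\<le>n. q ^ (n - k) * gb q n k * ((- z) ^ Suc k * q ^ (Suc k choose 2)))
      = (- z) * q ^ n * (\<Sum>k\<le>n. gb q n k * (- z) ^ k * q ^ (k choose 2))"
    unfolding sum_distrib_left
  proof (rule sum.cong)
    fix k assume "k \<in> {..n}"
    then have "q ^ (n - k) * q ^ k = q ^ n" by (simp add: power_add[symmetric])
    then show "q ^ (n - k) * gb q n k * ((- z) ^ Suc k * q ^ (Suc k choose 2)) =
         - z * q ^ n * (gb q n k * (- z) ^ k * q ^ (k choose 2))"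
      by (simp add: choose2_Suc power_add)
  qed simp
  moreover have F2: "(\<Sum>k\<le>Suc n. gb q (Suc n) k * (- z) ^ k * q ^ (k choose 2))
     = (\<Sum>k\<le>n. gb q n k * ((- z) ^ k * q ^ (k choose 2))) + (\<Sum>k\<le>n. q ^ (n - k) * gb q n k * ((- z) ^ Suc k * q ^ (Suc k choose 2)))"
    unfolding mult.assoc by (rule gb_pascal_sum[unfolded mult.assoc])
  ultimately have "(\<Sum>k\<le>Suc n. gb q (Suc n) k * (- z) ^ k * q ^ (k choose 2))
     = qpoch z q n + (- z) * q ^ n * qpoch z q n"
    using Suc.IH by (simp only: mult.assoc)
  then show ?case by (simp add: qpoch_Suc algebra_simps)
qed

lemma G_identity:
  "(\<Sum>k\<le>n. gb q n k * (z ^ k * q ^ (2 * (k choose 2)) * qpoch (z * q ^ k) q (n - k))) = 1"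
proof (induction n arbitrary: z)
  case 0 then show ?case by (simp add: binomial_eq_0)
next
  case (Suc n z)
  let ?f = "\<lambda>k. z ^ k * q ^ (2 * (k choose 2)) * qpoch (z * q ^ k) q (Suc n - k)"
  have F2: "(\<Sum>k\<le>Suc n. gb q (Suc n) k * ?f k)
     = (\<Sum>k\<le>n. gb q n k * ?f k) + (\<Sum>k\<le>n. q ^ (n - k) * gb q n k * ?f (Suc k))"
    by (rule gb_pascal_sum)
  have A: "(\<Sum>k\<le>n. gb q n k * ?f k) = (1 - z * q ^ n) *
      (\<Sum>k\<le>n. gb q n k * (z ^ k * q ^ (2 * (k choose 2)) * qpoch (z * q ^ k) q (n - k)))"
    unfolding sum_distrib_left
  proof (rule sum.cong)
    fix k assume "k \<in> {..n}"
    then have k: "k \<le> n" by simp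
    then have e: "Suc n - k = Suc (n - k)" by simp
    have "q ^ k * q ^ (n - k) = q ^ n" using k by (simp add: power_add[symmetric])
    then show "gb q n k * ?f k = (1 - z * q ^ n) * (gb q n k * (z ^ k * q ^ (2 * (k choose 2)) * qpoch (z * q ^ k) q (n - k)))"
      unfolding e qpoch_Suc by (simp add: mult.assoc mult.left_commute)
  qed simp
  have B: "(\<Sum>k\<le>n. q ^ (n - k) * gb q n k * ?f (Suc k)) = (z * q ^ n) *
      (\<Sum>k\<le>n. gb q n k * ((z * q) ^ k * q ^ (2 * (k choose 2)) * qpoch ((z * q) * q ^ k) q (n - k)))"
    unfolding sum_distrib_left
  proof (rule sum.cong)
    fix k assume "k \<in> {..n}"
    then have k: "k \<le> n" by simp
    have "n - k + k * 2 = k + n" using k by simp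
    then have "q ^ (n - k) * q ^ (k * 2) = q ^ k * q ^ n" by (metis power_add)
    then show "q ^ (n - k) * gb q n k * ?f (Suc k) = (z * q ^ n) * (gb q n k * ((z * q) ^ k * q ^ (2 * (k choose 2)) * qpoch ((z * q) * q ^ k) q (n - k)))"
      by (simp add: choose2_Suc power_add power_mult_distrib algebra_simps)
  qed simp
  show ?case using F2 A B Suc.IH[of z] Suc.IH[of "z * q"] by simp
qed

lemma qpoch_shift_swap:
  assumes "k \<le> n"
  shows "qpoch (c * q ^ k) q (n - k) * qpoch (c * q ^ n) q m
       = qpoch (c * q ^ k) q m * qpoch (c * q ^ m * q ^ k) q (n - k)"
proof -
  have e1: "c * q ^ k * q ^ (n - k) = c * q ^ n" using assms
    by (simp add: mult.assoc power_add[symmetric])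
  have e2: "c * q ^ k * q ^ m = c * q ^ m * q ^ k" by (simp add: mult_ac)
  have "qpoch (c * q ^ k) q (n - k) * qpoch (c * q ^ n) q m = qpoch (c * q ^ k) q ((n - k) + m)"
    using qpoch_add[of "c * q ^ k" q "n - k" m] e1 by simp
  also have "\<dots> = qpoch (c * q ^ k) q (m + (n - k))" by (simp add: add.commute)
  also have "\<dots> = qpoch (c * q ^ k) q m * qpoch (c * q ^ m * q ^ k) q (n - k)"
    using qpoch_add[of "c * q ^ k" q m "n - k"] e2 by simp
  finally show ?thesis .
qed

lemma coef2:
  assumes nz: "\<And>k m. k \<le> n \<Longrightarrow> qpoch (c * q ^ k) q m \<noteq> 0"
  shows "inverse (qpoch (c * q ^ n) q m) = (\<Sum>k=0..n. gb q n k * c ^ k * q ^ (2 * (k choose 2))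
           * qpoch (c * q ^ k) q (n - k) * q ^ (k * m) * inverse (qpoch (c * q ^ k) q m))"
proof -
  have P: "qpoch (c * q ^ n) q m \<noteq> 0" using nz by simp
  have "(\<Sum>k=0..n. gb q n k * c ^ k * q ^ (2 * (k choose 2))
           * qpoch (c * q ^ k) q (n - k) * q ^ (k * m) * inverse (qpoch (c * q ^ k) q m)) * qpoch (c * q ^ n) q m
      = (\<Sum>k\<le>n. gb q n k * ((c * q ^ m) ^ k * q ^ (2 * (k choose 2)) * qpoch (c * q ^ m * q ^ k) q (n - k)))"
    unfolding sum_distrib_right atLeast0AtMost
  proof (rule sum.cong)
    fix k assume "k \<in> {..n}"
    then have k: "k \<le> n" by simp
    have Q: "qpoch (c * q ^ k) q m \<noteq> 0" using nz k by simp
    have sw: "qpoch (c * q ^ k) q (n - k) * qpoch (c * q ^ n) q m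
       = qpoch (c * q ^ k) q m * qpoch (c * q ^ m * q ^ k) q (n - k)" by (rule qpoch_shift_swap[OF k])
    have "gb q n k * c ^ k * q ^ (2 * (k choose 2)) * qpoch (c * q ^ k) q (n - k) * q ^ (k * m)
          * inverse (qpoch (c * q ^ k) q m) * qpoch (c * q ^ n) q m
        = gb q n k * c ^ k * q ^ (2 * (k choose 2)) * q ^ (k * m)
          * inverse (qpoch (c * q ^ k) q m) * (qpoch (c * q ^ k) q (n - k) * qpoch (c * q ^ n) q m)"
      by (simp add: mult_ac)
    also have "\<dots> = gb q n k * c ^ k * q ^ (2 * (k choose 2)) * q ^ (k * m) * qpoch (c * q ^ m * q ^ k) q (n - k)"
      unfolding sw using Q by (simp add: field_simps)
    also have "\<dots> = gb q n k * ((c * q ^ m) ^ k * q ^ (2 * (k choose 2)) * qpoch (c * q ^ m * q ^ k) q (n - k))"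
      by (simp add: power_mult_distrib power_mult[symmetric] mult.commute mult_ac)
    finally show "gb q n k * c ^ k * q ^ (2 * (k choose 2)) * qpoch (c * q ^ k) q (n - k) * q ^ (k * m)
          * inverse (qpoch (c * q ^ k) q m) * qpoch (c * q ^ n) q m = gb q n k * ((c * q ^ m) ^ k * q ^ (2 * (k choose 2)) * qpoch (c * q ^ m * q ^ k) q (n - k))" .
  qed simp
  also have "\<dots> = 1" by (rule G_identity)
  finally show ?thesis using P by (simp add: field_simps)
qed

lemma qpoch_refl:
  assumes q: "q \<noteq> 0" and c: "c \<noteq> 0"
  shows "q ^ (Suc n choose 2) * qpoch (c / q ^ n) q n = (- c) ^ n * qpoch (q / c) q n"
proof (induction n)
  case 0 then show ?case by (simp add: binomial_eq_0)
next
  case (Suc n)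
  have e: "c / q ^ Suc n * q = c / q ^ n" using q by (simp add: field_simps)
  have "q ^ (Suc (Suc n) choose 2) * qpoch (c / q ^ Suc n) q (Suc n)
      = (q ^ Suc n - c) * (q ^ (Suc n choose 2) * qpoch (c / q ^ n) q n)"
    unfolding qpoch_Suc' e choose2_Suc power_add using q by (simp add: field_simps)
  also have "\<dots> = (q ^ Suc n - c) * ((- c) ^ n * qpoch (q / c) q n)" using Suc.IH by simp
  also have "\<dots> = (- c) ^ Suc n * qpoch (q / c) q (Suc n)"
    unfolding qpoch_Suc using c by (simp add: field_simps)
  finally show ?case .
qed

lemma choose_exp_aux: "(Suc (k + t) choose 2) + (k choose 2) = (k + t) * k + (Suc t choose 2)"
  by (induction k) (simp_all add: choose2_Suc binomial_eq_0 algebra_simps)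

lemma choose_exp: "k \<le> n \<Longrightarrow> (Suc n choose 2) + (k choose 2) = n * k + ((Suc n - k) choose 2)"
  using choose_exp_aux[of k "n - k"] by (simp add: Suc_diff_le)

lemma coef1:
  assumes q: "q \<noteq> 0" and c: "c \<noteq> 0"
    and nzd: "qpoch (c / q ^ n) q m \<noteq> 0" and nzc: "qpoch c q m \<noteq> 0" and nzP: "qpoch (q / c) q n \<noteq> 0"
  shows "inverse (qpoch (c / q ^ n) q m) = 1 / qpoch (q / c) q n *
     (\<Sum>k=0..n. gb q n k * (- c) powi (int k - int n) * q ^ ((n + 1 - k) choose 2) * q ^ (k * m)
        * inverse (qpoch c q m))"
proof -
  define d where "d = c / q ^ n"
  have dq: "d * q ^ n = c" using q by (simp add: d_def)
  have E1: "qpoch d q n * qpoch c q m = qpoch d q m * qpoch (d * q ^ m) q n"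
    using qpoch_add[of d q n m] qpoch_add[of d q m n] dq by (simp add: add.commute)
  define S where "S = (\<Sum>k\<le>n. gb q n k * (- c) ^ k * q ^ ((Suc n - k) choose 2) * q ^ (k * m))"
  have E2: "q ^ (Suc n choose 2) * qpoch (d * q ^ m) q n = S"
    unfolding qbinomial_thm S_def sum_distrib_left
  proof (rule sum.cong)
    fix k assume "k \<in> {..n}"
    then have k: "k \<le> n" by simp
    have a: "(- (d * q ^ m)) ^ k * q ^ (n * k) = (- c) ^ k * q ^ (k * m)"
    proof -
      have "(- (d * q ^ m)) ^ k * q ^ (n * k) = (- (d * q ^ m) * q ^ n) ^ k"
        by (simp add: power_mult power_mult_distrib[symmetric])
      also have "- (d * q ^ m) * q ^ n = (- c) * q ^ m" using dq by (simp add: mult_ac)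
      also have "((- c) * q ^ m) ^ k = (- c) ^ k * q ^ (k * m)"
        by (metis power_mult_distrib power_mult mult.commute)
      finally show ?thesis .
    qed
    have b: "q ^ (Suc n choose 2) * q ^ (k choose 2) = q ^ (n * k) * q ^ ((Suc n - k) choose 2)"
      using choose_exp[OF k] by (metis power_add)
    have "q ^ (Suc n choose 2) * (gb q n k * (- (d * q ^ m)) ^ k * q ^ (k choose 2))
        = gb q n k * ((- (d * q ^ m)) ^ k * q ^ (n * k)) * q ^ ((Suc n - k) choose 2)"
      using b by (simp add: mult_ac)
    also have "\<dots> = gb q n k * (- c) ^ k * q ^ ((Suc n - k) choose 2) * q ^ (k * m)"
      unfolding a by (simp add: mult_ac)
    finally show "q ^ (Suc n choose 2) * (gb q n k * (- (d * q ^ m)) ^ k * q ^ (k choose 2))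
        = gb q n k * (- c) ^ k * q ^ ((Suc n - k) choose 2) * q ^ (k * m)" .
  qed simp
  have E3: "q ^ (Suc n choose 2) * qpoch d q n = (- c) ^ n * qpoch (q / c) q n"
    unfolding d_def by (rule qpoch_refl[OF q c])
  have key: "(- c) ^ n * qpoch (q / c) q n * qpoch c q m = qpoch d q m * S"
    using E1 E2 E3 by (metis mult.assoc mult.commute)
  have sumeq: "(\<Sum>k=0..n. gb q n k * (- c) powi (int k - int n) * q ^ ((n + 1 - k) choose 2) * q ^ (k * m)
        * inverse (qpoch c q m)) = S / ((- c) ^ n * qpoch c q m)"
    unfolding S_def sum_divide_distrib atLeast0AtMost
  proof (rule sum.cong)
    fix k assume "k \<in> {..n}"
    have "(- c) powi (int k - int n) = (- c) ^ k / (- c) ^ n"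
      using c by (simp add: power_int_diff)
    then show "gb q n k * (- c) powi (int k - int n) * q ^ ((n + 1 - k) choose 2) * q ^ (k * m)
        * inverse (qpoch c q m) = gb q n k * (- c) ^ k * q ^ ((Suc n - k) choose 2) * q ^ (k * m) / ((- c) ^ n * qpoch c q m)"
      using c nzc by (simp add: field_simps)
  qed simp
  have Snz: "S \<noteq> 0" using key nzd nzc nzP c unfolding d_def[symmetric] by auto
  show ?thesis unfolding sumeq
    using key Snz nzd nzc nzP c unfolding d_def[symmetric] by (simp add: field_simps)
qed



lemma qpoch_bound:
  assumes q: "norm q < 1"
  shows "norm (qpoch z q m) \<le> exp (norm z / (1 - norm q))"
proof -
  have "norm (qpoch z q m) = (\<Prod>j<m. norm (1 - z * q ^ j))"
    by (simp add: qpoch_def prod_norm)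
  also have "\<dots> \<le> (\<Prod>j<m. exp (norm z * norm q ^ j))"
  proof (rule prod_mono)
    fix j assume "j \<in> {..<m}"
    have "norm (1 - z * q ^ j) \<le> 1 + norm z * norm q ^ j"
      by (metis norm_triangle_ineq4 norm_one norm_mult norm_power)
    also have "\<dots> \<le> exp (norm z * norm q ^ j)" by (metis add.commute exp_ge_add_one_self)
    finally show "0 \<le> norm (1 - z * q ^ j) \<and> norm (1 - z * q ^ j) \<le> exp (norm z * norm q ^ j)" by simp
  qed
  also have "\<dots> = exp (\<Sum>j<m. norm z * norm q ^ j)" by (simp add: exp_sum)
  also have "(\<Sum>j<m. norm z * norm q ^ j) \<le> norm z / (1 - norm q)"
  proof -
    have "(\<Sum>j<m. norm q ^ j) = (1 - norm q ^ m) / (1 - norm q)"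
      using q by (simp add: sum_gp_strict)
    also have "\<dots> \<le> 1 / (1 - norm q)" using q by (simp add: divide_right_mono)
    finally show ?thesis
      by (simp add: sum_distrib_left[symmetric]) (metis mult_left_mono norm_ge_zero times_divide_eq_right mult_1_right)
  qed
  then have "exp (\<Sum>j<m. norm z * norm q ^ j) \<le> exp (norm z / (1 - norm q))" by simp
  finally show ?thesis .
qed

lemma qpoch_inv_bound:
  assumes q: "norm q < 1" and nz: "\<And>m. qpoch z q m \<noteq> 0"
  shows "\<exists>B. \<forall>m. norm (inverse (qpoch z q m)) \<le> B"
proof -
  let ?f = "\<lambda>k. 1 + (- z * q ^ k)"
  have "summable (\<lambda>k. norm z * norm q ^ k)"
    using q by (intro summable_mult summable_geometric) simp
  then have s: "summable (\<lambda>k. norm (- z * q ^ k))" by (simp add: norm_mult norm_power)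
  have n1: "- z * q ^ k \<noteq> -1" for k
    using nz[of "Suc k"] by (auto simp: qpoch_Suc)
  have cp: "convergent_prod ?f" by (rule summable_imp_convergent_prod_complex[OF s n1])
  have fnz: "?f k \<noteq> 0" for k using n1[of k] by (metis add_eq_0_iff)
  have L: "(\<lambda>n. \<Prod>i\<le>n. ?f i) \<longlonglongrightarrow> prodinf ?f" by (rule convergent_prod_LIMSEQ[OF cp])
  have P: "prodinf ?f \<noteq> 0" by (rule prodinf_nonzero[OF cp fnz])
  have eq: "(\<Prod>i\<le>n. ?f i) = qpoch z q (Suc n)" for n
    by (simp add: qpoch_def lessThan_Suc_atMost[symmetric])
  have "(\<lambda>n. inverse (qpoch z q (Suc n))) \<longlonglongrightarrow> inverse (prodinf ?f)"
    using tendsto_inverse[OF L P] unfolding eq .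
  then have "Bseq (\<lambda>n. inverse (qpoch z q (Suc n)))" using convergent_imp_Bseq convergentI by blast
  then have "Bseq (\<lambda>n. inverse (qpoch z q n))" by (rule Bseq_Suc_iff[THEN iffD1])
  then show ?thesis by (auto simp: Bseq_def)
qed

definition PT :: "complex \<Rightarrow> complex \<Rightarrow> complex \<Rightarrow> complex \<Rightarrow> complex \<Rightarrow> complex \<Rightarrow> complex \<Rightarrow> complex \<Rightarrow> nat \<times> nat \<Rightarrow> complex" where
  "PT q a b b' c c' x y = (\<lambda>(m, n). qpoch a q (m + n) * qpoch b q m * qpoch b' q n
        / (qpoch q q m * qpoch q q n * qpoch c q m * qpoch c' q n) * x ^ m * y ^ n)"

lemma Phi2_PT: "Phi2 q a b b' c c' x y = infsum (PT q a b b' c c' x y) UNIV"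
  by (simp add: Phi2_def PT_def)

lemma PT_split: "PT q a b b' c c' x y (m, n) = (x ^ m * inverse (qpoch c q m)) *
   (qpoch a q (m + n) * qpoch b q m * qpoch b' q n * inverse (qpoch q q m * qpoch q q n * qpoch c' q n) * y ^ n)"
  by (simp add: PT_def divide_inverse inverse_mult_distrib mult_ac)

lemma qpoch_qq_nz: "norm q < 1 \<Longrightarrow> qpoch q q m \<noteq> 0"
proof -
  assume q: "norm q < 1"
  have "1 - q * q ^ j \<noteq> 0" for j
  proof
    assume "1 - q * q ^ j = 0"
    then have "norm (q ^ Suc j) = 1" by simp
    moreover have "norm q ^ Suc j \<le> norm q ^ 1" using q by (intro power_decreasing) auto
    then have "norm (q ^ Suc j) < 1" using q by (simp add: norm_power norm_mult)
    ultimately show False by simp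
  qed
  then show ?thesis by (simp add: qpoch_def)
qed

lemma geo2_summable:
  fixes K :: real
  assumes "0 \<le> K" "0 \<le> r" "r < 1" "0 \<le> s" "s < 1"
  shows "(\<lambda>(m, n). K * r ^ m * s ^ n) summable_on (UNIV :: (nat \<times> nat) set)"
proof -
  have "(\<lambda>(m, n). K * r ^ m * s ^ n) summable_on Sigma UNIV (\<lambda>_. UNIV)"
  proof (rule summable_on_SigmaI)
    fix m :: nat
    have "(\<lambda>n. s ^ n) sums (1 / (1 - s))" using assms geometric_sums[of s] by simp
    then have "(\<lambda>n. K * r ^ m * s ^ n) sums (K * r ^ m * (1 / (1 - s)))" by (rule sums_mult)
    then show "((\<lambda>n. (\<lambda>(m, n). K * r ^ m * s ^ n) (m, n)) has_sum (K * r ^ m * (1 / (1 - s)))) UNIV"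
      using assms by (auto intro!: sums_nonneg_imp_has_sum)
  next
    have "summable (\<lambda>m. K * (1 / (1 - s)) * r ^ m)" using assms by (intro summable_mult summable_geometric) simp
    then show "(\<lambda>m. K * r ^ m * (1 / (1 - s))) summable_on UNIV"
      using assms by (subst summable_on_UNIV_nonneg_real_iff) (auto simp: mult_ac)
  qed (use assms in auto)
  then show ?thesis by simp
qed

lemma PT_summable:
  assumes q: "norm q < 1" and x: "norm x < 1" and y: "norm y < 1"
    and nzc: "\<And>m. qpoch c q m \<noteq> 0" and nzc': "\<And>m. qpoch c' q m \<noteq> 0"
  shows "PT q a b b' c c' x y summable_on UNIV"
proof -
  obtain Bq where Bq: "\<And>m. norm (inverse (qpoch q q m)) \<le> Bq" using qpoch_inv_bound[OF q qpoch_qq_nz[OF q]] by blast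
  obtain Bc where Bc: "\<And>m. norm (inverse (qpoch c q m)) \<le> Bc" using qpoch_inv_bound[OF q nzc] by blast
  obtain Bc' where Bc': "\<And>m. norm (inverse (qpoch c' q m)) \<le> Bc'" using qpoch_inv_bound[OF q nzc'] by blast
  define Ea where "Ea = exp (norm a / (1 - norm q))"
  define Eb where "Eb = exp (norm b / (1 - norm q))"
  define Eb' where "Eb' = exp (norm b' / (1 - norm q))"
  have Ea: "norm (qpoch a q m) \<le> Ea" for m unfolding Ea_def by (rule qpoch_bound[OF q])
  have Eb: "norm (qpoch b q m) \<le> Eb" for m unfolding Eb_def by (rule qpoch_bound[OF q])
  have Eb': "norm (qpoch b' q m) \<le> Eb'" for m unfolding Eb'_def by (rule qpoch_bound[OF q])
  have Bq0: "0 \<le> Bq" using Bq[of 0] by simp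
  have Bc0: "0 \<le> Bc" using Bc[of 0] by simp
  have Bc'0: "0 \<le> Bc'" using Bc'[of 0] by simp
  define K where "K = Ea * Eb * Eb' * Bq * Bq * Bc * Bc'"
  have K0: "0 \<le> K" unfolding K_def Ea_def Eb_def Eb'_def using Bq0 Bc0 Bc'0 by simp
  have bound: "norm (PT q a b b' c c' x y p) \<le> (\<lambda>(m, n). K * norm x ^ m * norm y ^ n) p" for p
  proof (cases p)
    case (Pair m n)
    have "PT q a b b' c c' x y (m, n) = qpoch a q (m + n) * qpoch b q m * qpoch b' q n *
       inverse (qpoch q q m) * inverse (qpoch q q n) * inverse (qpoch c q m) * inverse (qpoch c' q n) * (x ^ m * y ^ n)"
      by (simp add: PT_def divide_inverse inverse_mult_distrib mult_ac)
    then have "norm (PT q a b b' c c' x y (m, n)) = norm (qpoch a q (m + n)) * norm (qpoch b q m) * norm (qpoch b' q n) *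
       norm (inverse (qpoch q q m)) * norm (inverse (qpoch q q n)) * norm (inverse (qpoch c q m)) * norm (inverse (qpoch c' q n)) * (norm x ^ m * norm y ^ n)"
      by (simp add: norm_mult norm_power)
    also have "\<dots> \<le> Ea * Eb * Eb' * Bq * Bq * Bc * Bc' * (norm x ^ m * norm y ^ n)"
      by (intro mult_mono mult_nonneg_nonneg Ea Eb Eb' Bq Bc Bc' order_refl norm_ge_zero zero_le_power
          Bq0 Bc0 Bc'0 exp_ge_zero) (simp_all add: Ea_def Eb_def Eb'_def)
    finally show ?thesis using Pair by (simp add: K_def mult_ac)
  qed
  have "(\<lambda>(m, n). K * norm x ^ m * norm y ^ n) summable_on (UNIV :: (nat \<times> nat) set)"
    using K0 x y by (intro geo2_summable) auto
  then have "(\<lambda>p. norm (PT q a b b' c c' x y p)) summable_on UNIV"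
    by (rule Infinite_Sum.abs_summable_on_comparison_test') (use bound in auto)
  then show ?thesis by (simp add: summable_on_iff_abs_summable_on_complex)
qed

lemma infsum_lincomb:
  fixes f :: "nat \<Rightarrow> 'a \<Rightarrow> complex"
  assumes "finite I" "\<And>i. i \<in> I \<Longrightarrow> f i summable_on A"
  shows "(\<Sum>i\<in>I. c i * infsum (f i) A) = infsum (\<lambda>p. \<Sum>i\<in>I. c i * f i p) A"
proof -
  have "((\<lambda>p. \<Sum>i\<in>I. c i * f i p) has_sum (\<Sum>i\<in>I. c i * infsum (f i) A)) A"
    using assms
  proof (induction I rule: finite_induct)
    case empty then show ?case by simp
  next
    case (insert i I)
    have "((\<lambda>p. c i * f i p) has_sum (c i * infsum (f i) A)) A"
      using insert.prems by (intro has_sum_cmult_right) auto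
    then show ?case using insert by (simp add: has_sum_add)
  qed
  then show ?thesis by (simp add: infsumI)
qed



lemma qbinom_gb: "norm q < 1 \<Longrightarrow> k \<le> n \<Longrightarrow> qbinom q n k = gb q n k"
  using gb_prod[of k n q] qpoch_qq_nz[of q]
  by (simp add: qbinom_def field_simps)

lemma norm_xqk: "norm (q::complex) < 1 \<Longrightarrow> norm (x::complex) < 1 \<Longrightarrow> norm (x * q ^ k) < 1"
proof -
  assume q: "norm q < 1" and x: "norm x < 1"
  have "norm q ^ k \<le> 1" using q by (simp add: power_le_one)
  then have "norm x * norm q ^ k \<le> norm x" by (simp add: mult_left_le)
  then show ?thesis using x by (simp add: norm_mult norm_power)
qed

lemma part2:
  fixes q a b b' c c' x y :: complex and n :: nat
  assumes q: "norm q < 1" and x: "norm x < 1" and y: "norm y < 1"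
    and nz: "\<forall>k\<le>n. \<forall>m. qpoch (c * q ^ k) q m \<noteq> 0" and nzc': "\<forall>m. qpoch c' q m \<noteq> 0"
  shows "Phi2 q a b b' (c * q ^ n) c' x y =
            (\<Sum>k=0..n. qbinom q n k * c ^ k * q ^ (2 * (k choose 2)) * qpoch (c * q ^ k) q (n - k)
                        * Phi2 q a b b' (c * q ^ k) c' (x * q ^ k) y)"
proof -
  define \<alpha> where "\<alpha> k = qbinom q n k * c ^ k * q ^ (2 * (k choose 2)) * qpoch (c * q ^ k) q (n - k)" for k
  have "(\<Sum>k=0..n. qbinom q n k * c ^ k * q ^ (2 * (k choose 2)) * qpoch (c * q ^ k) q (n - k)
                        * Phi2 q a b b' (c * q ^ k) c' (x * q ^ k) y)
      = (\<Sum>k\<in>{0..n}. \<alpha> k * infsum (PT q a b b' (c * q ^ k) c' (x * q ^ k) y) UNIV)"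
    by (simp add: \<alpha>_def Phi2_PT)
  also have "\<dots> = infsum (\<lambda>p. \<Sum>k\<in>{0..n}. \<alpha> k * PT q a b b' (c * q ^ k) c' (x * q ^ k) y p) UNIV"
    by (rule infsum_lincomb) (use q x y nz nzc' in \<open>auto intro!: PT_summable norm_xqk\<close>)
  also have "\<dots> = infsum (PT q a b b' (c * q ^ n) c' x y) UNIV"
  proof (rule infsum_cong)
    fix p :: "nat \<times> nat"
    obtain m l where p: "p = (m, l)" by (cases p)
    define R where "R = qpoch a q (m + l) * qpoch b q m * qpoch b' q l * inverse (qpoch q q m * qpoch q q l * qpoch c' q l) * y ^ l"
    have "(\<Sum>k\<in>{0..n}. \<alpha> k * PT q a b b' (c * q ^ k) c' (x * q ^ k) y p)
        = x ^ m * R * (\<Sum>k=0..n. gb q n k * c ^ k * q ^ (2 * (k choose 2))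
           * qpoch (c * q ^ k) q (n - k) * q ^ (k * m) * inverse (qpoch (c * q ^ k) q m))"
      unfolding sum_distrib_left
    proof (rule sum.cong)
      fix k assume "k \<in> {0..n}"
      then have k: "k \<le> n" by simp
      show "\<alpha> k * PT q a b b' (c * q ^ k) c' (x * q ^ k) y p = x ^ m * R * (gb q n k * c ^ k * q ^ (2 * (k choose 2))
           * qpoch (c * q ^ k) q (n - k) * q ^ (k * m) * inverse (qpoch (c * q ^ k) q m))"
        unfolding p PT_split \<alpha>_def qbinom_gb[OF q k] R_def
        by (simp add: power_mult_distrib power_mult[symmetric] mult_ac)
    qed simp
    also have "\<dots> = x ^ m * R * inverse (qpoch (c * q ^ n) q m)"
      using coef2[of n c q m] nz by simp
    also have "\<dots> = PT q a b b' (c * q ^ n) c' x y p"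
      unfolding p PT_split R_def by (simp add: mult_ac)
    finally show "(\<Sum>k\<in>{0..n}. \<alpha> k * PT q a b b' (c * q ^ k) c' (x * q ^ k) y p) = PT q a b b' (c * q ^ n) c' x y p" .
  qed
  also have "\<dots> = Phi2 q a b b' (c * q ^ n) c' x y" by (simp add: Phi2_PT)
  finally show ?thesis ..
qed

lemma part1:
  fixes q a b b' c c' x y :: complex and n :: nat
  assumes q0: "0 < norm q" and q: "norm q < 1" and x: "norm x < 1" and y: "norm y < 1"
    and c: "c \<noteq> 0" and nzd: "\<forall>m. qpoch (c / q ^ n) q m \<noteq> 0" and nzc: "\<forall>m. qpoch c q m \<noteq> 0"
    and nzc': "\<forall>m. qpoch c' q m \<noteq> 0" and nzP: "qpoch (q / c) q n \<noteq> 0"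
  shows "Phi2 q a b b' (c / q ^ n) c' x y =
            1 / qpoch (q / c) q n *
            (\<Sum>k=0..n. qbinom q n k * (- c) powi (int k - int n) * q ^ ((n + 1 - k) choose 2)
                        * Phi2 q a b b' c c' (x * q ^ k) y)"
proof -
  have qnz: "q \<noteq> 0" using q0 by auto
  define \<beta> where "\<beta> k = qbinom q n k * (- c) powi (int k - int n) * q ^ ((n + 1 - k) choose 2)" for k
  have "(\<Sum>k=0..n. qbinom q n k * (- c) powi (int k - int n) * q ^ ((n + 1 - k) choose 2)
                        * Phi2 q a b b' c c' (x * q ^ k) y)
      = (\<Sum>k\<in>{0..n}. \<beta> k * infsum (PT q a b b' c c' (x * q ^ k) y) UNIV)"
    by (simp add: \<beta>_def Phi2_PT)
  also have "\<dots> = infsum (\<lambda>p. \<Sum>k\<in>{0..n}. \<beta> k * PT q a b b' c c' (x * q ^ k) y p) UNIV"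
    by (rule infsum_lincomb) (use q x y nzc nzc' in \<open>auto intro!: PT_summable norm_xqk\<close>)
  finally have S: "(\<Sum>k=0..n. qbinom q n k * (- c) powi (int k - int n) * q ^ ((n + 1 - k) choose 2)
                        * Phi2 q a b b' c c' (x * q ^ k) y) = infsum (\<lambda>p. \<Sum>k\<in>{0..n}. \<beta> k * PT q a b b' c c' (x * q ^ k) y p) UNIV" .
  have "1 / qpoch (q / c) q n * infsum (\<lambda>p. \<Sum>k\<in>{0..n}. \<beta> k * PT q a b b' c c' (x * q ^ k) y p) UNIV
     = infsum (\<lambda>p. 1 / qpoch (q / c) q n * (\<Sum>k\<in>{0..n}. \<beta> k * PT q a b b' c c' (x * q ^ k) y p)) UNIV"
    by (rule infsum_cmult_right'[symmetric])
  also have "\<dots> = infsum (PT q a b b' (c / q ^ n) c' x y) UNIV"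
  proof (rule infsum_cong)
    fix p :: "nat \<times> nat"
    obtain m l where p: "p = (m, l)" by (cases p)
    define R where "R = qpoch a q (m + l) * qpoch b q m * qpoch b' q l * inverse (qpoch q q m * qpoch q q l * qpoch c' q l) * y ^ l"
    have "(\<Sum>k\<in>{0..n}. \<beta> k * PT q a b b' c c' (x * q ^ k) y p)
        = x ^ m * R * (\<Sum>k=0..n. gb q n k * (- c) powi (int k - int n) * q ^ ((n + 1 - k) choose 2) * q ^ (k * m)
        * inverse (qpoch c q m))"
      unfolding sum_distrib_left
    proof (rule sum.cong)
      fix k assume "k \<in> {0..n}"
      then have k: "k \<le> n" by simp
      show "\<beta> k * PT q a b b' c c' (x * q ^ k) y p = x ^ m * R * (gb q n k * (- c) powi (int k - int n) * q ^ ((n + 1 - k) choose 2) * q ^ (k * m)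
        * inverse (qpoch c q m))"
        unfolding p PT_split \<beta>_def qbinom_gb[OF q k] R_def
        by (simp add: power_mult_distrib power_mult[symmetric] mult_ac)
    qed simp
    then have "1 / qpoch (q / c) q n * (\<Sum>k\<in>{0..n}. \<beta> k * PT q a b b' c c' (x * q ^ k) y p)
        = x ^ m * R * inverse (qpoch (c / q ^ n) q m)"
      using coef1[OF qnz c, of n m] nzd nzc nzP by (simp add: mult_ac)
    also have "\<dots> = PT q a b b' (c / q ^ n) c' x y p"
      unfolding p PT_split R_def by (simp add: mult_ac)
    finally show "1 / qpoch (q / c) q n * (\<Sum>k\<in>{0..n}. \<beta> k * PT q a b b' c c' (x * q ^ k) y p) = PT q a b b' (c / q ^ n) c' x y p" .
  qed
  finally show ?thesis using S by (simp add: Phi2_PT)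
qed


theorem theorem10:
  fixes q a b b' c c' x y :: complex and n :: nat
  assumes "0 < norm q" and "norm q < 1"
    and "norm x < 1" and "norm y < 1"
  shows "((c \<noteq> 0 \<and> (\<forall>m. qpoch (c / q ^ n) q m \<noteq> 0) \<and> (\<forall>m. qpoch c q m \<noteq> 0)
            \<and> (\<forall>m. qpoch c' q m \<noteq> 0) \<and> qpoch (q / c) q n \<noteq> 0) \<longrightarrow>
          Phi2 q a b b' (c / q ^ n) c' x y =
            1 / qpoch (q / c) q n *
            (\<Sum>k=0..n. qbinom q n k * (- c) powi (int k - int n) * q ^ ((n + 1 - k) choose 2)
                        * Phi2 q a b b' c c' (x * q ^ k) y))
       \<and> (((\<forall>k\<le>n. \<forall>m. qpoch (c * q ^ k) q m \<noteq> 0) \<and> (\<forall>m. qpoch c' q m \<noteq> 0)) \<longrightarrow>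
          Phi2 q a b b' (c * q ^ n) c' x y =
            (\<Sum>k=0..n. qbinom q n k * c ^ k * q ^ (2 * (k choose 2)) * qpoch (c * q ^ k) q (n - k)
                        * Phi2 q a b b' (c * q ^ k) c' (x * q ^ k) y))"
  proof (intro conjI impI)
  assume h: "c \<noteq> 0 \<and> (\<forall>m. qpoch (c / q ^ n) q m \<noteq> 0) \<and> (\<forall>m. qpoch c q m \<noteq> 0)
            \<and> (\<forall>m. qpoch c' q m \<noteq> 0) \<and> qpoch (q / c) q n \<noteq> 0"
  then show "Phi2 q a b b' (c / q ^ n) c' x y =
            1 / qpoch (q / c) q n *
            (\<Sum>k=0..n. qbinom q n k * (- c) powi (int k - int n) * q ^ ((n + 1 - k) choose 2)
                        * Phi2 q a b b' c c' (x * q ^ k) y)"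
    using part1[OF assms] by blast
next
  assume h: "(\<forall>k\<le>n. \<forall>m. qpoch (c * q ^ k) q m \<noteq> 0) \<and> (\<forall>m. qpoch c' q m \<noteq> 0)"
  then show "Phi2 q a b b' (c * q ^ n) c' x y =
            (\<Sum>k=0..n. qbinom q n k * c ^ k * q ^ (2 * (k choose 2)) * qpoch (c * q ^ k) q (n - k)
                        * Phi2 q a b b' (c * q ^ k) c' (x * q ^ k) y)"
    using part2[OF assms(2-4)] by blast
qed

end
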